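(* Let $R$ be an exchange ring and $\alpha=[a_1\ a_2\ \cdots\ a_n]$ a right unimodular row over $R$ (i.e. $a_1R+\cdots+a_nR=R$), with $n\ge 2$. Then $\alpha$ can be transformed by a finite sequence of elementary column operations to a row $[b_1\ b_2\ \cdots\ b_n]$ such that $Rb_1R=R$ and $b_i\in a_iRa_i$ for all $i\ge 2$.
   Context: All rings are unital. A ring $R$ is an exchange ring if for every $a\in R$ there is an idempotent $e\in aR$ with $1-e\in(1-a)R$ (equivalently, $R_R$ has the finite exchange property). An elementary column operation on a row $[c_1\ \cdots\ c_n]$ replaces some entry $c_i$ by $c_i+c_jr$ for some $j\neq i$ and $r\in R$. *)

theory Defs
  imports Main
begin

definition exchange_ring :: "'a::ring_1 itself \<Rightarrow> bool" where
  "exchange_ring _ \<longleftrightarrow>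
     (\<forall>a::'a. \<exists>e. e * e = e \<and> (\<exists>r. e = a * r) \<and> (\<exists>s. 1 - e = (1 - a) * s))"

definition right_unimodular :: "'a::ring_1 list \<Rightarrow> bool" where
  "right_unimodular as \<longleftrightarrow>
     (\<exists>rs. length rs = length as \<and> sum_list (map (\<lambda>(a, r). a * r) (zip as rs)) = 1)"

definition elem_col_op :: "'a::ring_1 list \<Rightarrow> 'a list \<Rightarrow> bool" where
  "elem_col_op cs ds \<longleftrightarrow>
     (\<exists>i j r. i < length cs \<and> j < length cs \<and> i \<noteq> j \<and> ds = cs[i := cs ! i + cs ! j * r])"

text \<open>The two-sided ideal RbR equals R, i.e. 1 is a finite sum of terms x b y.\<close>
definition full_two_sided :: "'a::ring_1 \<Rightarrow> bool" where
  "full_two_sided b \<longleftrightarrow>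
     (\<exists>xs ys. length xs = length ys \<and> sum_list (map (\<lambda>(x, y). x * b * y) (zip xs ys)) = 1)"

end

theory Submission
  imports Defs
begin

definition U :: "'a::ring_1 list \<Rightarrow> bool" where
  "U cs \<longleftrightarrow> (\<exists>r. (\<Sum>j<length cs. cs ! j * r j) = 1)"

lemma sum_zip_nth:
  assumes "length rs = length as"
  shows "sum_list (map (\<lambda>(a, r). a * r) (zip as rs)) = (\<Sum>j<length as. as ! j * rs ! j)"
  using assms by (simp add: sum_list_sum_nth atLeast0LessThan)

lemma U_init: "right_unimodular as \<Longrightarrow> U as"
  unfolding right_unimodular_def U_def
  by (metis sum_zip_nth)

lemma U_step:
  assumes "elem_col_op cs ds" "U cs"
  shows "U ds"
proof -
  obtain i j t where ij: "i < length cs" "j < length cs" "i \<noteq> j" and ds: "ds = cs[i := cs ! i + cs ! j * t]"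
    using assms(1) unfolding elem_col_op_def by blast
  obtain r where r: "(\<Sum>k<length cs. cs ! k * r k) = 1" using assms(2) unfolding U_def by blast
  define r' where "r' = r(j := r j - t * r i)"
  have eq: "ds ! k * r' k = cs ! k * r k + (if k = i then cs ! j * t * r i else 0)
      - (if k = j then cs ! j * t * r i else 0)" if "k < length cs" for k
    using ij that by (auto simp: ds r'_def algebra_simps)
  have "(\<Sum>k<length ds. ds ! k * r' k) = (\<Sum>k<length cs. cs ! k * r k + (if k = i then cs ! j * t * r i else 0)
      - (if k = j then cs ! j * t * r i else 0))"
    using eq ds by (auto intro: sum.cong)
  also have "\<dots> = 1" using ij r by (simp add: sum.distrib sum_subtractf)
  finally show ?thesis unfolding U_def by blast
qed

lemma U_steps: "elem_col_op\<^sup>*\<^sup>* cs ds \<Longrightarrow> U cs \<Longrightarrow> U ds"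
  by (induction rule: rtranclp_induct) (auto intro: U_step)

lemma len_step: "elem_col_op cs ds \<Longrightarrow> length ds = length cs"
  unfolding elem_col_op_def by auto

lemma len_steps: "elem_col_op\<^sup>*\<^sup>* cs ds \<Longrightarrow> length ds = length cs"
  by (induction rule: rtranclp_induct) (auto dest: len_step)

lemma add_comb:
  assumes "i < length cs"
  shows "k \<le> length cs \<Longrightarrow> elem_col_op\<^sup>*\<^sup>* cs (cs[i := cs ! i + (\<Sum>j\<in>{..<k}-{i}. cs ! j * y j)])"
proof (induction k)
  case 0
  then show ?case by simp
next
  case (Suc k)
  define cs' where "cs' = cs[i := cs ! i + (\<Sum>j\<in>{..<k}-{i}. cs ! j * y j)]"
  have IH: "elem_col_op\<^sup>*\<^sup>* cs cs'" using Suc unfolding cs'_def by simp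
  show ?case
  proof (cases "k = i")
    case True
    then have "{..<Suc k}-{i} = {..<k}-{i}" by auto
    then show ?thesis using IH cs'_def by simp
  next
    case False
    have s: "{..<Suc k}-{i} = insert k ({..<k}-{i})" using False by auto
    have op: "elem_col_op cs' (cs'[i := cs' ! i + cs' ! k * y k])"
      unfolding elem_col_op_def using False Suc.prems assms
      by (rule_tac x=i in exI, rule_tac x=k in exI, rule_tac x="y k" in exI) (simp add: cs'_def)
    have "cs'[i := cs' ! i + cs' ! k * y k] = cs[i := cs ! i + (\<Sum>j\<in>{..<Suc k}-{i}. cs ! j * y j)]"
      using False assms Suc.prems by (simp add: cs'_def s algebra_simps)
    then show ?thesis using IH op by (metis rtranclp.rtrancl_into_rtrancl)
  qed
qed

lemma exch_comax:
  fixes a :: "'a::ring_1"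
  assumes "exchange_ring TYPE('a)" "a * r + c = 1"
  shows "\<exists>e x y. e * e = e \<and> e = a * x \<and> 1 - e = c * y"
proof -
  obtain e s t where "e * e = e" "e = (a * r) * s" "1 - e = (1 - a * r) * t"
    using assms(1) unfolding exchange_ring_def by blast
  moreover have "1 - a * r = c" using assms(2) by (simp add: algebra_simps)
  ultimately have "e * e = e \<and> e = a * (r * s) \<and> 1 - e = c * t" by (simp add: mult.assoc)
  then show ?thesis by blast
qed

lemma col_idem:
  fixes cs :: "'a::ring_1 list"
  assumes "exchange_ring TYPE('a)" "U cs" "i < length cs"
  shows "\<exists>e x y. e * e = e \<and> e = cs ! i * x \<and> 1 - e = (\<Sum>j\<in>{..<length cs}-{i}. cs ! j * y j)"
proof -
  obtain r where r: "(\<Sum>k<length cs. cs ! k * r k) = 1" using assms(2) unfolding U_def by blast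
  have "(\<Sum>k<length cs. cs ! k * r k) = cs ! i * r i + (\<Sum>j\<in>{..<length cs}-{i}. cs ! j * r j)"
    using assms(3) by (simp add: sum.remove)
  with r have "cs ! i * r i + (\<Sum>j\<in>{..<length cs}-{i}. cs ! j * r j) = 1" by simp
  from exch_comax[OF assms(1) this] obtain e x y where e: "e * e = e" "e = cs ! i * x"
    "1 - e = (\<Sum>j\<in>{..<length cs}-{i}. cs ! j * r j) * y"
    by blast
  have "1 - e = (\<Sum>j\<in>{..<length cs}-{i}. cs ! j * (r j * y))"
    using e(3) by (simp add: sum_distrib_right mult.assoc)
  with e(1,2) show ?thesis by (intro exI[of _ e] exI[of _ x] exI[of _ "\<lambda>j. r j * y"]) simp
qed

lemma idem_facts:
  fixes e :: "'a::ring_1"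
  assumes "e * e = e"
  shows "e * (1 - e) = 0" "(1 - e) * e = 0" "(1 - e) * (1 - e) = 1 - e"
  using assms by (simp_all add: algebra_simps)

lemma final:
  fixes cs :: "'a::ring_1 list"
  assumes ex: "exchange_ring TYPE('a)" and u: "U cs" and l: "0 < length cs"
  shows "\<exists>ds. elem_col_op\<^sup>*\<^sup>* cs ds \<and> full_two_sided (ds ! 0) \<and> (\<forall>i. 1 \<le> i \<and> i < length cs \<longrightarrow> ds ! i = cs ! i)"
proof -
  obtain e x y where e: "e * e = e" "e = cs ! 0 * x" and ey: "1 - e = (\<Sum>j\<in>{..<length cs}-{0}. cs ! j * y j)"
    using col_idem[OF ex u l] by blast
  define a where "a = cs ! 0"
  define f where "f = 1 - e"
  define t where "t j = y j * ((1 - a) * f)" for j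
  define b where "b = a + f * (1 - a) * f"
  have S: "(\<Sum>j\<in>{..<length cs}-{0}. cs ! j * t j) = f * (1 - a) * f"
    unfolding t_def f_def ey by (simp add: sum_distrib_right mult.assoc)
  define ds where "ds = cs[0 := cs ! 0 + (\<Sum>j\<in>{..<length cs}-{0}. cs ! j * t j)]"
  have r: "elem_col_op\<^sup>*\<^sup>* cs ds" unfolding ds_def using add_comb[OF l] by blast
  have d0: "ds ! 0 = b" using l unfolding ds_def b_def S a_def by simp
  have ef: "e * f = 0" "f * e = 0" "f * f = f" using idem_facts[OF e(1)] by (simp_all add: f_def)
  have "e * b * x = e * a * x + (e * f) * (1 - a) * f * x" by (simp add: b_def algebra_simps)
  also have "\<dots> = e" using ef e by (simp add: a_def mult.assoc)
  finally have 1: "e * b * x = e" .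
  have "f * b * f = f * a * f + (f * f) * (1 - a) * (f * f)" by (simp add: b_def algebra_simps)
  also have "\<dots> = f" using ef by (simp add: algebra_simps)
  finally have 2: "f * b * f = f" .
  have "full_two_sided b" unfolding full_two_sided_def
    by (rule exI[of _ "[e, f]"], rule exI[of _ "[x, f]"]) (simp add: 1 2 del: f_def, simp add: f_def)
  moreover have "\<forall>i. 1 \<le> i \<and> i < length cs \<longrightarrow> ds ! i = cs ! i" unfolding ds_def by simp
  ultimately show ?thesis using r d0 by metis
qed

lemma process:
  fixes as :: "'a::ring_1 list"
  assumes ex: "exchange_ring TYPE('a)" and u: "U as"
  shows "k \<le> length as \<Longrightarrow> \<exists>cs. elem_col_op\<^sup>*\<^sup>* as cs \<and>
    (\<forall>i. 1 \<le> i \<and> i < k \<longrightarrow> (\<exists>r. cs ! i = as ! i * r * as ! i)) \<and>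
    (\<forall>i. k \<le> i \<and> i < length as \<longrightarrow> cs ! i = as ! i)"
proof (induction k)
  case 0
  show ?case by (rule exI[of _ as]) simp
next
  case (Suc k)
  then obtain cs where cs: "elem_col_op\<^sup>*\<^sup>* as cs"
    "\<forall>i. 1 \<le> i \<and> i < k \<longrightarrow> (\<exists>r. cs ! i = as ! i * r * as ! i)"
    "\<forall>i. k \<le> i \<and> i < length as \<longrightarrow> cs ! i = as ! i" by auto
  have len: "length cs = length as" using len_steps[OF cs(1)] .
  show ?case
  proof (cases "k = 0")
    case True
    then show ?thesis using cs by (intro exI[of _ cs]) auto
  next
    case False
    have uc: "U cs" using U_steps[OF cs(1) u] .
    have kl: "k < length cs" using Suc.prems len by simp
    obtain e x y where e: "e * e = e" "e = cs ! k * x" and ey: "1 - e = (\<Sum>j\<in>{..<length cs}-{k}. cs ! j * y j)"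
      using col_idem[OF ex uc kl] by blast
    have ck: "cs ! k = as ! k" using cs(3) kl len by simp
    define t where "t j = - (y j * cs ! k)" for j
    define ds where "ds = cs[k := cs ! k + (\<Sum>j\<in>{..<length cs}-{k}. cs ! j * t j)]"
    have r: "elem_col_op\<^sup>*\<^sup>* cs ds" unfolding ds_def using add_comb[OF kl] by blast
    have "(\<Sum>j\<in>{..<length cs}-{k}. cs ! j * t j) = - ((1 - e) * cs ! k)"
      unfolding t_def ey by (simp add: sum_distrib_right mult.assoc sum_negf)
    then have "ds ! k = e * cs ! k" using kl unfolding ds_def by (simp add: algebra_simps)
    then have dk: "ds ! k = as ! k * x * as ! k" using e ck by simp
    show ?thesis
    proof (intro exI[of _ ds] conjI allI impI)
      show "elem_col_op\<^sup>*\<^sup>* as ds" using cs(1) r by simp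
    next
      fix i assume i: "1 \<le> i \<and> i < Suc k"
      show "\<exists>r. ds ! i = as ! i * r * as ! i"
      proof (cases "i = k")
        case True then show ?thesis using dk by blast
      next
        case False then show ?thesis using cs(2) i unfolding ds_def by simp
      qed
    next
      fix i assume i: "Suc k \<le> i \<and> i < length as"
      then show "ds ! i = as ! i" using cs(3) unfolding ds_def by simp
    qed
  qed
qed

theorem corollary2p5:
  fixes as :: "'a::ring_1 list"
  assumes "exchange_ring TYPE('a)"
    and "length as \<ge> 2"
    and "right_unimodular as"
  shows "\<exists>bs. elem_col_op\<^sup>*\<^sup>* as bs \<and> full_two_sided (bs ! 0) \<and>
           (\<forall>i. 1 \<le> i \<and> i < length as \<longrightarrow> (\<exists>r. bs ! i = as ! i * r * as ! i))"
proof -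
  have u: "U as" using U_init[OF assms(3)] .
  obtain cs where cs: "elem_col_op\<^sup>*\<^sup>* as cs"
    "\<forall>i. 1 \<le> i \<and> i < length as \<longrightarrow> (\<exists>r. cs ! i = as ! i * r * as ! i)"
    using process[OF assms(1) u, of "length as"] by auto
  have len: "length cs = length as" using len_steps[OF cs(1)] .
  have uc: "U cs" using U_steps[OF cs(1) u] .
  obtain ds where ds: "elem_col_op\<^sup>*\<^sup>* cs ds" "full_two_sided (ds ! 0)"
    "\<forall>i. 1 \<le> i \<and> i < length cs \<longrightarrow> ds ! i = cs ! i"
  proof -
    have "0 < length cs" using len assms(2) by linarith
    from final[OF assms(1) uc this] show ?thesis using len that by metis
  qed
  show ?thesis
    using ds cs len by (intro exI[of _ ds]) auto
qed

end
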